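(* Let $N=2J$ with $J\ge 1$ an integer. For real numbers $\gamma_1,\dots,\gamma_{N-2}$ satisfying $\gamma_n=\gamma_{N-1-n}$ for all $n$, let $H=H(\gamma)$ be the real $N\times N$ matrix with entries $$H_{n,n}=2n-1-N\ (1\le n\le N),\qquad H_{n,n+2}=\gamma_n,\quad H_{n+2,n}=-\gamma_n\ (1\le n\le N-2),$$ and all other entries zero. Then: (a) The span of the odd-indexed standard basis vectors $e_1,e_3,\dots,e_{2J-1}$ and the span of the even-indexed ones $e_2,e_4,\dots,e_{2J}$ are both invariant under $H$, so $H$ is permutation-similar to $A\oplus B$, where $A$ is the $J\times J$ tridiagonal matrix with diagonal $(1-2J,5-2J,\dots,2J-3)$, superdiagonal $(\gamma_1,\gamma_3,\dots,\gamma_{2J-3})$ and subdiagonal $(-\gamma_1,-\gamma_3,\dots,-\gamma_{2J-3})$, and $B$ is the $J\times J$ tridiagonal matrix with diagonal $(3-2J,7-2J,\dots,2J-1)$, superdiagonal $(\gamma_2,\gamma_4,\dots,\gamma_{2J-2})$ and subdiagonal the negatives of these. (b) If all eigenvalues of $A$ coincide, their common value is $\eta=-1$; if all eigenvalues of $B$ coincide, their common value is $\eta=+1$. Consequently, for no real choice of the $\gamma_n$ does $H$ have a single eigenvalue of algebraic multiplicity $N$. (c) For the choice $\gamma_{2k-1}=\gamma_{2k}=2\sqrt{k(J-k)}$, $k=1,\dots,J-1$ (which satisfies $\gamma_n=\gamma_{N-1-n}$), one has $A=-I_J+2T_J$ and $B=I_J+2T_J$; thus $A$ has the single eigenvalue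 $-1$ and $B$ the single eigenvalue $+1$, each with a single Jordan block of size $J$ (geometric multiplicity one).
   Context: For an integer $M\ge1$, $T_M$ denotes the real $M\times M$ tridiagonal matrix with $(T_M)_{k,k}=2k-1-M$ for $1\le k\le M$, $(T_M)_{k,k+1}=\sqrt{k(M-k)}$ and $(T_M)_{k+1,k}=-\sqrt{k(M-k)}$ for $1\le k\le M-1$, all other entries zero (so $T_1=[0]$, $T_2=\begin{pmatrix}-1&1\\-1&1\end{pmatrix}$, $T_3=\begin{pmatrix}-2&\sqrt2&0\\-\sqrt2&0&\sqrt2\\0&-\sqrt2&2\end{pmatrix}$). It is used that $T_M$ is nilpotent with a single Jordan block of size $M$ (the exceptional-point limit of the tridiagonal toy Hamiltonian of dimension $M$). *)

theory Defs
  imports "Jordan_Normal_Form.Jordan_Normal_Form" "HOL-Combinatorics.Permutations"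
begin

text \<open>All matrices are Jordan_Normal_Form matrices, indexed from 0.
  Paper index n (1-based) corresponds to matrix index n-1.
  The parameters gamma_1, ..., gamma_(N-2) are a function nat to real, used at 1..N-2.\<close>

definition T_mat :: "nat \<Rightarrow> real mat" where
  "T_mat M = mat M M (\<lambda>(i,j).
      if i = j then 2 * real (i+1) - 1 - real M
      else if j = i + 1 then sqrt (real (i+1) * (real M - real (i+1)))
      else if i = j + 1 then - sqrt (real (j+1) * (real M - real (j+1)))
      else 0)"

definition H_mat :: "nat \<Rightarrow> (nat \<Rightarrow> real) \<Rightarrow> real mat" where
  "H_mat N \<gamma> = mat N N (\<lambda>(i,j).
      if i = j then 2 * real (i+1) - 1 - real N
      else if j = i + 2 then \<gamma> (i+1)
      else if i = j + 2 then - \<gamma> (j+1)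
      else 0)"

definition A_mat :: "nat \<Rightarrow> (nat \<Rightarrow> real) \<Rightarrow> real mat" where
  "A_mat J \<gamma> = mat J J (\<lambda>(i,j).
      if i = j then 1 - 2 * real J + 4 * real i
      else if j = i + 1 then \<gamma> (2*i+1)
      else if i = j + 1 then - \<gamma> (2*j+1)
      else 0)"

definition B_mat :: "nat \<Rightarrow> (nat \<Rightarrow> real) \<Rightarrow> real mat" where
  "B_mat J \<gamma> = mat J J (\<lambda>(i,j).
      if i = j then 3 - 2 * real J + 4 * real i
      else if j = i + 1 then \<gamma> (2*i+2)
      else if i = j + 1 then - \<gamma> (2*j+2)
      else 0)"

definition perm_matrix :: "nat \<Rightarrow> (nat \<Rightarrow> nat) \<Rightarrow> real mat" where
  "perm_matrix n \<sigma> = mat n n (\<lambda>(i,j). if j = \<sigma> i then 1 else 0)"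

text \<open>Span of the odd-indexed (1-based) standard basis vectors e_1, e_3, ...:
  vectors vanishing at all 1-based even positions (0-based odd indices); similarly even.\<close>
definition odd_span :: "nat \<Rightarrow> real vec set" where
  "odd_span N = {v \<in> carrier_vec N. \<forall>i<N. odd i \<longrightarrow> v $ i = 0}"

definition even_span :: "nat \<Rightarrow> real vec set" where
  "even_span N = {v \<in> carrier_vec N. \<forall>i<N. even i \<longrightarrow> v $ i = 0}"

abbreviation cmat :: "real mat \<Rightarrow> complex mat" where
  "cmat M \<equiv> map_mat complex_of_real M"

end

theory Submission
  imports Defs "Jordan_Normal_Form.Schur_Decomposition"
begin

hide_const (open) Coset.order

lemma mult_left_single:
  fixes P X :: "'a::comm_semiring_1 mat"
  assumes P: "P \<in> carrier_mat n n" and X: "X \<in> carrier_mat n m"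
    and Pe: "\<And>k. k < n \<Longrightarrow> P $$ (i,k) = (if k = f then c else 0)"
    and i: "i < n" and j: "j < m"
  shows "(P * X) $$ (i,j) = (if f < n then c * X $$ (f, j) else 0)"
proof -
  have "(P * X) $$ (i,j) = (\<Sum>k\<in>{0..<n}. P $$ (i,k) * X $$ (k,j))"
    using P X i j by (simp add: scalar_prod_def)
  also have "\<dots> = (\<Sum>k\<in>{0..<n}. if k = f then c * X $$ (k,j) else 0)"
    by (rule sum.cong, auto simp: Pe)
  also have "\<dots> = (if f < n then c * X $$ (f, j) else 0)"
    by (subst sum.delta, auto)
  finally show ?thesis .
qed

lemma mult_right_single:
  fixes P X :: "'a::comm_semiring_1 mat"
  assumes P: "P \<in> carrier_mat n m" and X: "X \<in> carrier_mat k n"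
    and Pe: "\<And>l. l < n \<Longrightarrow> P $$ (l,j) = (if l = g then c else 0)"
    and i: "i < k" and j: "j < m"
  shows "(X * P) $$ (i,j) = (if g < n then X $$ (i, g) * c else 0)"
proof -
  have "(X * P) $$ (i,j) = (\<Sum>l\<in>{0..<n}. X $$ (i,l) * P $$ (l,j))"
    using P X i j by (simp add: scalar_prod_def)
  also have "\<dots> = (\<Sum>l\<in>{0..<n}. if l = g then X $$ (i,l) * c else 0)"
    by (rule sum.cong, auto simp: Pe)
  also have "\<dots> = (if g < n then X $$ (i, g) * c else 0)"
    by (subst sum.delta, auto)
  finally show ?thesis .
qed

lemma sum_tri:
  fixes f :: "nat \<Rightarrow> 'a::comm_monoid_add"
  assumes i: "i < n" and f0: "\<And>k. k < n \<Longrightarrow> k \<noteq> i \<Longrightarrow> k \<noteq> i+1 \<Longrightarrow> k + 1 \<noteq> i \<Longrightarrow> f k = 0"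
  shows "(\<Sum>k\<in>{0..<n}. f k) = (if 0 < i then f (i - 1) else 0) + f i + (if i + 1 < n then f (i+1) else 0)"
proof -
  have "(\<Sum>k\<in>{0..<n}. f k) = (\<Sum>k\<in>{0..<n}. (if k = i - 1 \<and> 0 < i then f k else 0)
      + (if k = i then f k else 0) + (if k = i + 1 then f k else 0))"
    by (rule sum.cong, auto simp: f0)
  also have "\<dots> = (if 0 < i then f (i - 1) else 0) + f i + (if i + 1 < n then f (i+1) else 0)"
    using i by (auto simp: sum.distrib sum.delta)
  finally show ?thesis .
qed


definition dd :: "nat \<Rightarrow> nat \<Rightarrow> real" where "dd M i = sqrt (real ((M - 1) choose i))"
definition Dm :: "nat \<Rightarrow> real mat" where "Dm M = mat M M (\<lambda>(i,j). if i = j then dd M i else 0)"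
definition Di :: "nat \<Rightarrow> real mat" where "Di M = mat M M (\<lambda>(i,j). if i = j then 1 / dd M i else 0)"
definition Km :: "nat \<Rightarrow> real mat" where "Km M = mat M M (\<lambda>(i,j).
   if i = j then 2 * (2 * real i - (real M - 1)) else if j = i + 1 then 2 * real (i+1)
   else if i = j + 1 then - 2 * (real M - 1 - real j) else 0)"

lemma dd_pos: "i < M \<Longrightarrow> dd M i > 0"
  unfolding dd_def by auto

lemma binom_step: "i < n \<Longrightarrow> real (i+1) * real (n choose (i+1)) = real (n - i) * real (n choose i)"
proof -
  assume "i < n"
  have "(n - i) * (n choose i) = (Suc i) * (n choose Suc i)"
    using binomial_absorb_comp[of n i] binomial_absorption[of i n] by simp
  then show ?thesis by (metis Suc_eq_plus1 of_nat_mult)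
qed

lemma dd_step1: assumes "i + 1 < M"
  shows "dd M i * sqrt (real (i+1) * (real M - real (i+1))) = real (i+1) * dd M (i+1)"
proof -
  let ?x = "real ((M-1) choose i)" and ?y = "real ((M-1) choose (i+1))"
  have e: "real (i+1) * ?y = (real M - real (i+1)) * ?x"
    using binom_step[of i "M-1"] assms by (simp add: of_nat_diff)
  have "dd M i * sqrt (real (i+1) * (real M - real (i+1))) = sqrt (?x * (real (i+1) * (real M - real (i+1))))"
    unfolding dd_def by (simp add: real_sqrt_mult)
  also have "?x * (real (i+1) * (real M - real (i+1))) = real (i+1) * ((real M - real (i+1)) * ?x)"
    by (simp only: mult_ac)
  also have "\<dots> = real (i+1) * (real (i+1) * ?y)" by (simp only: e)
  also have "\<dots> = (real (i+1))^2 * ?y" by (simp add: power2_eq_square)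
  also have "sqrt \<dots> = real (i+1) * dd M (i+1)"
    unfolding dd_def by (simp add: real_sqrt_mult)
  finally show ?thesis .
qed

lemma dd_step2: assumes "i + 1 < M"
  shows "dd M (i+1) * sqrt (real (i+1) * (real M - real (i+1))) = (real M - 1 - real i) * dd M i"
proof -
  let ?x = "real ((M-1) choose i)" and ?y = "real ((M-1) choose (i+1))"
  have e: "real (i+1) * ?y = (real M - real (i+1)) * ?x"
    using binom_step[of i "M-1"] assms by (simp add: of_nat_diff)
  have "dd M (i+1) * sqrt (real (i+1) * (real M - real (i+1))) = sqrt (?y * (real (i+1) * (real M - real (i+1))))"
    unfolding dd_def by (simp add: real_sqrt_mult)
  also have "?y * (real (i+1) * (real M - real (i+1))) = (real M - real (i+1)) * (real (i+1) * ?y)"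
    by (simp only: mult_ac)
  also have "\<dots> = (real M - real (i+1)) * ((real M - real (i+1)) * ?x)" by (simp only: e)
  also have "\<dots> = (real M - 1 - real i)^2 * ?x" by (simp add: power2_eq_square algebra_simps)
  also have "sqrt \<dots> = (real M - 1 - real i) * dd M i"
    unfolding dd_def using assms by (simp add: real_sqrt_mult)
  finally show ?thesis .
qed

lemma Dm_carrier[simp]: "Dm M \<in> carrier_mat M M" and Di_carrier[simp]: "Di M \<in> carrier_mat M M"
  and Km_carrier[simp]: "Km M \<in> carrier_mat M M" and T_carrier[simp]: "T_mat M \<in> carrier_mat M M"
  by (auto simp: Dm_def Di_def Km_def T_mat_def)

lemma Dm_Di: "Dm M * Di M = 1\<^sub>m M" "Di M * Dm M = 1\<^sub>m M"
proof -
  show "Dm M * Di M = 1\<^sub>m M"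
  proof (rule eq_matI)
    fix i j assume ij: "i < dim_row (1\<^sub>m M)" "j < dim_col (1\<^sub>m M)"
    have "(Dm M * Di M) $$ (i,j) = (if i < M then dd M i * Di M $$ (i,j) else 0)"
      by (rule mult_left_single[where n=M and m=M], insert ij, auto simp: Dm_def)
    then show "(Dm M * Di M) $$ (i,j) = 1\<^sub>m M $$ (i,j)" using ij dd_pos[of i M]
      by (auto simp: Di_def)
  qed (auto simp: Dm_def Di_def)
  show "Di M * Dm M = 1\<^sub>m M"
  proof (rule eq_matI)
    fix i j assume ij: "i < dim_row (1\<^sub>m M)" "j < dim_col (1\<^sub>m M)"
    have "(Di M * Dm M) $$ (i,j) = (if i < M then 1 / dd M i * Dm M $$ (i,j) else 0)"
      by (rule mult_left_single[where n=M and m=M], insert ij, auto simp: Di_def)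
    then show "(Di M * Dm M) $$ (i,j) = 1\<^sub>m M $$ (i,j)" using ij dd_pos[of i M]
      by (auto simp: Dm_def)
  qed (auto simp: Dm_def Di_def)
qed

lemma Dm_T: "Dm M * (2 \<cdot>\<^sub>m T_mat M) = Km M * Dm M"
proof (rule eq_matI)
  fix i j assume ij: "i < dim_row (Km M * Dm M)" "j < dim_col (Km M * Dm M)"
  hence i: "i < M" and j: "j < M" by (auto simp: Km_def Dm_def)
  have l: "(Dm M * (2 \<cdot>\<^sub>m T_mat M)) $$ (i,j) = (if i < M then dd M i * (2 \<cdot>\<^sub>m T_mat M) $$ (i,j) else 0)"
    by (rule mult_left_single[where n=M and m=M], insert i j, auto simp: Dm_def)
  have r: "(Km M * Dm M) $$ (i,j) = (if j < M then Km M $$ (i,j) * dd M j else 0)"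
    by (rule mult_right_single[where n=M and m=M], insert i j, auto simp: Dm_def)
  show "(Dm M * (2 \<cdot>\<^sub>m T_mat M)) $$ (i,j) = (Km M * Dm M) $$ (i,j)"
    unfolding l r using i j dd_step1[of i M] dd_step2[of j M]
    by (auto simp: Km_def T_mat_def algebra_simps)
qed (auto simp: Dm_def Km_def T_mat_def)


lemma binom_absorb_real: "real (Suc k) * real (j choose Suc k) = (real j - real k) * real (j choose k)"
proof (cases "k \<le> j")
  case True
  have "Suc k * (j choose Suc k) = (j - k) * (j choose k)"
    using binomial_absorb_comp[of j k] binomial_absorption[of k j] by simp
  then have "real (Suc k * (j choose Suc k)) = real ((j - k) * (j choose k))" by simp
  then show ?thesis using True by (simp add: of_nat_diff algebra_simps)
next
  case False
  then have "j choose k = 0" "j choose Suc k = 0" by auto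
  then show ?thesis by (metis mult_zero_right of_nat_0)
qed

lemma core_identity:
  fixes i j :: nat and n :: real
  shows "(if 0 < i then - (n - real i + 1) * real (j choose (i-1)) else 0)
        + (2 * real i - n) * real (j choose i) + real (i+1) * real (j choose (i+1))
       = (real j - n) * real (Suc j choose i)"
proof (cases i)
  case 0
  have "real (1::nat) * real (j choose 1) = (real j - 0) * real (j choose 0)"
    using binom_absorb_real[of 0 j] by simp
  then show ?thesis using 0 by simp
next
  case (Suc k)
  let ?a = "real (j choose k)" and ?b = "real (j choose i)" and ?c = "real (j choose (i+1))"
  have R1: "real i * ?b = (real j - real k) * ?a" using binom_absorb_real[of k j] Suc by simp
  have R2: "real (i+1) * ?c = (real j - real i) * ?b" using binom_absorb_real[of i j] by simp
  have S: "real (Suc j choose i) = ?b + ?a" using Suc by simp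
  have "(if 0 < i then - (n - real i + 1) * real (j choose (i-1)) else 0)
        + (2 * real i - n) * ?b + real (i+1) * ?c
      = - (n - real i + 1) * ?a + (2 * real i - n) * ?b + (real j - real i) * ?b"
    using Suc R2 by simp
  also have "\<dots> = (real j - n) * (?b + ?a) + (real i * ?b - (real j - real k) * ?a)"
    using Suc by (simp add: algebra_simps)
  also have "\<dots> = (real j - n) * (?b + ?a)" using R1 by simp
  finally show ?thesis using S by simp
qed


fun bc :: "nat \<Rightarrow> nat \<Rightarrow> real" where
  "bc M 0 = 1"
| "bc M (Suc j) = - 2 * (real M - 1 - real j) * bc M j"

definition Um :: "nat \<Rightarrow> real mat" where "Um M = mat M M (\<lambda>(i,j). bc M j * real (j choose i))"
definition Zm :: "nat \<Rightarrow> real mat" where "Zm M = mat M M (\<lambda>(i,j). if i = j + 1 then 1 else 0)"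

lemma Um_carrier[simp]: "Um M \<in> carrier_mat M M" and Zm_carrier[simp]: "Zm M \<in> carrier_mat M M"
  by (auto simp: Um_def Zm_def)

lemma Km_Um: "Km M * Um M = Um M * Zm M"
proof (rule eq_matI)
  fix i j assume ij: "i < dim_row (Um M * Zm M)" "j < dim_col (Um M * Zm M)"
  hence i: "i < M" and j: "j < M" by (auto simp: Um_def Zm_def)
  have r: "(Um M * Zm M) $$ (i,j) = (if j + 1 < M then Um M $$ (i,j+1) * 1 else 0)"
    by (rule mult_right_single[where n=M and m=M], insert i j, auto simp: Zm_def)
  have "(Km M * Um M) $$ (i,j) = (\<Sum>k\<in>{0..<M}. Km M $$ (i,k) * Um M $$ (k,j))"
    using i j by (simp add: scalar_prod_def Km_def Um_def)
  also have "\<dots> = (if 0 < i then Km M $$ (i,i-1) * Um M $$ (i-1,j) else 0)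
     + Km M $$ (i,i) * Um M $$ (i,j) + (if i + 1 < M then Km M $$ (i,i+1) * Um M $$ (i+1,j) else 0)"
    using i by (intro sum_tri[OF i]) (auto simp: Km_def)
  also have "\<dots> = 2 * bc M j * ((if 0 < i then - ((real M - 1) - real i + 1) * real (j choose (i-1)) else 0)
        + (2 * real i - (real M - 1)) * real (j choose i) + real (i+1) * real (j choose (i+1)))"
  proof -
    have c: "\<not> Suc i < M \<Longrightarrow> j choose (Suc i) = 0" using j by auto
    show ?thesis
    proof (cases "Suc i < M")
      case True
      then show ?thesis using i j by (auto simp: Km_def Um_def algebra_simps of_nat_diff)
    next
      case False
      then have "j < Suc i" using i j by simp
      then show ?thesis using i j False by (auto simp: Km_def Um_def algebra_simps of_nat_diff binomial_eq_0)
    qed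
  qed
  also have "\<dots> = 2 * bc M j * ((real j - (real M - 1)) * real (Suc j choose i))"
    by (simp only: core_identity)
  also have "\<dots> = (Um M * Zm M) $$ (i,j)"
  proof (cases "Suc j < M")
    case True
    then show ?thesis unfolding r using i j by (auto simp: Um_def algebra_simps)
  next
    case False
    then have "M = Suc j" using j by simp
    then show ?thesis unfolding r using i j by (auto simp: Um_def algebra_simps)
  qed
  finally show "(Km M * Um M) $$ (i,j) = (Um M * Zm M) $$ (i,j)" .
qed (auto simp: Um_def Zm_def Km_def)


lemma bc_nz: "j < M \<Longrightarrow> bc M j \<noteq> 0"
  by (induction j) auto

lemma Um_inv: "\<exists>V. V \<in> carrier_mat M M \<and> Um M * V = 1\<^sub>m M \<and> V * Um M = 1\<^sub>m M"
proof -
  have ut: "upper_triangular (Um M)" unfolding upper_triangular_def Um_def by auto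
  have "det (Um M) = prod_list (diag_mat (Um M))" by (rule det_upper_triangular[OF ut Um_carrier])
  also have "\<dots> \<noteq> 0" unfolding diag_mat_def Um_def by (auto simp: prod_list_zero_iff bc_nz)
  finally have "det (Um M) \<noteq> 0" .
  from det_non_zero_imp_unit[OF Um_carrier this, of undefined]
  show ?thesis unfolding Units_def ring_mat_def by auto
qed

definition Rm :: "nat \<Rightarrow> real mat" where "Rm M = mat M M (\<lambda>(i,j). if j = M - 1 - i then 1 else 0)"

lemma Rm_carrier[simp]: "Rm M \<in> carrier_mat M M" by (simp add: Rm_def)

lemma Rm_left: assumes X: "X \<in> carrier_mat M M" and i: "i < M" and j: "j < M"
  shows "(Rm M * X) $$ (i,j) = X $$ (M - 1 - i, j)"
  using mult_left_single[OF Rm_carrier X, of i "M - 1 - i" 1 j] i j by (auto simp: Rm_def)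

lemma Rm_right: assumes X: "X \<in> carrier_mat M M" and i: "i < M" and j: "j < M"
  shows "(X * Rm M) $$ (i,j) = X $$ (i, M - 1 - j)"
  using mult_right_single[OF Rm_carrier X, of j "M - 1 - j" 1 i] i j by (auto simp: Rm_def)


lemma Rm_Rm: "Rm M * Rm M = 1\<^sub>m M"
proof (rule eq_matI)
  fix i j assume ij: "i < dim_row (1\<^sub>m M)" "j < dim_col (1\<^sub>m M)"
  hence i: "i < M" and j: "j < M" by auto
  have e: "(j = M - 1 - (M - 1 - i)) = (i = j)" using i j by linarith
  show "(Rm M * Rm M) $$ (i,j) = 1\<^sub>m M $$ (i,j)"
    unfolding Rm_left[OF Rm_carrier i j] using i j e by (simp add: Rm_def)
qed (auto simp: Rm_def)

lemma jb_carrier: "jordan_block M (a::'a::{zero,one}) \<in> carrier_mat M M"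
  unfolding carrier_mat_def by simp

lemma Rm_J: "Rm M * jordan_block M 0 * Rm M = Zm M"
proof (rule eq_matI)
  fix i j assume ij: "i < dim_row (Zm M)" "j < dim_col (Zm M)"
  hence i: "i < M" and j: "j < M" by (auto simp: Zm_def)
  have c: "Rm M * jordan_block M 0 \<in> carrier_mat M M" by (rule mult_carrier_mat[OF Rm_carrier jb_carrier])
  have j': "M - 1 - j < M" using j by linarith
  have i': "M - 1 - i < M" using i by linarith
  have "(Rm M * jordan_block M 0 * Rm M) $$ (i,j) = (Rm M * jordan_block M 0) $$ (i, M - 1 - j)"
    by (rule Rm_right[OF c i j])
  also have "\<dots> = jordan_block M 0 $$ (M - 1 - i, M - 1 - j)"
    by (rule Rm_left[OF jb_carrier i j'])
  also have "\<dots> = (if M - 1 - i = M - 1 - j then 0 else if Suc (M - 1 - i) = M - 1 - j then 1 else 0)"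
    by (rule jordan_block_index(1)[OF i' j'])
  also have "\<dots> = (if i = j + 1 then 1 else 0)"
  proof -
    have "(Suc (M - 1 - i) = M - 1 - j) = (i = j + 1)" using i j by linarith
    then show ?thesis by auto
  qed
  also have "\<dots> = Zm M $$ (i,j)" using i j by (simp add: Zm_def)
  finally show "(Rm M * jordan_block M 0 * Rm M) $$ (i,j) = Zm M $$ (i,j)" .
qed (auto simp: Zm_def Rm_def)


lemma sim_T: "\<exists>P Q. similar_mat_wit (2 \<cdot>\<^sub>m T_mat M) (jordan_block M (0::real)) P Q"
proof -
  have w1: "similar_mat_wit (2 \<cdot>\<^sub>m T_mat M) (Km M) (Di M) (Dm M)"
  proof (rule similar_mat_witI[of _ _ M])
    have "dim_row (2 \<cdot>\<^sub>m T_mat M) = M" by (simp add: T_mat_def)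
    then have "2 \<cdot>\<^sub>m T_mat M = (Di M * Dm M) * (2 \<cdot>\<^sub>m T_mat M)" by (simp add: Dm_Di)
    also have "\<dots> = Di M * (Dm M * (2 \<cdot>\<^sub>m T_mat M))" by (rule assoc_mult_mat[of _ M M _ M _ M], auto)
    also have "\<dots> = Di M * (Km M * Dm M)" by (simp add: Dm_T)
    also have "\<dots> = Di M * Km M * Dm M" by (rule assoc_mult_mat[symmetric, of _ M M _ M _ M], auto)
    finally show "2 \<cdot>\<^sub>m T_mat M = Di M * Km M * Dm M" .
  qed (auto simp: Dm_Di)
  obtain V where V: "V \<in> carrier_mat M M" "Um M * V = 1\<^sub>m M" "V * Um M = 1\<^sub>m M" using Um_inv by blast
  have w2: "similar_mat_wit (Km M) (Zm M) (Um M) V"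
  proof (rule similar_mat_witI[of _ _ M])
    have "Km M = Km M * (Um M * V)" using V by (simp add: right_mult_one_mat[OF Km_carrier])
    also have "\<dots> = (Km M * Um M) * V" by (rule assoc_mult_mat[symmetric, of _ M M _ M _ M], auto simp: V)
    also have "\<dots> = Um M * Zm M * V" by (simp add: Km_Um)
    finally show "Km M = Um M * Zm M * V" .
  qed (auto simp: V)
  have w3: "similar_mat_wit (Zm M) (jordan_block M 0) (Rm M) (Rm M)"
  proof (rule similar_mat_witI[of _ _ M])
    show "Zm M = Rm M * jordan_block M 0 * Rm M" by (rule Rm_J[symmetric])
    show "jordan_block M 0 \<in> carrier_mat M M" by (rule jb_carrier)
    show "Rm M * Rm M = 1\<^sub>m M" by (rule Rm_Rm)
    show "Rm M * Rm M = 1\<^sub>m M" by (rule Rm_Rm)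
    show "Zm M \<in> carrier_mat M M" by (rule Zm_carrier)
    show "Rm M \<in> carrier_mat M M" by (rule Rm_carrier)
    show "Rm M \<in> carrier_mat M M" by (rule Rm_carrier)
  qed

  show ?thesis by (rule exI, rule exI, rule similar_mat_wit_trans[OF similar_mat_wit_trans[OF w1 w2] w3])
qed


lemma sim_shift:
  fixes X Y P Q :: "'a::comm_ring_1 mat"
  assumes X: "X \<in> carrier_mat n n" and w: "similar_mat_wit X Y P Q"
  shows "similar_mat_wit (a \<cdot>\<^sub>m 1\<^sub>m n + X) (a \<cdot>\<^sub>m 1\<^sub>m n + Y) P Q"
proof -
  note d = similar_mat_witD2[OF X w]
  have P: "P \<in> carrier_mat n n" and Q: "Q \<in> carrier_mat n n" and Y: "Y \<in> carrier_mat n n"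
    using d by auto
  have "P * (a \<cdot>\<^sub>m 1\<^sub>m n + Y) = P * (a \<cdot>\<^sub>m 1\<^sub>m n) + P * Y"
    by (rule mult_add_distrib_mat[OF P _ Y], simp)
  then have "P * (a \<cdot>\<^sub>m 1\<^sub>m n + Y) * Q = (P * (a \<cdot>\<^sub>m 1\<^sub>m n) + P * Y) * Q" by simp
  also have "P * (a \<cdot>\<^sub>m 1\<^sub>m n) = a \<cdot>\<^sub>m P"
    using P by (simp add: mult_smult_distrib[of _ n n _ n])
  also have "(a \<cdot>\<^sub>m P + P * Y) * Q = (a \<cdot>\<^sub>m P) * Q + P * Y * Q"
    using P Y Q by (simp add: add_mult_distrib_mat[of _ n n])
  also have "(a \<cdot>\<^sub>m P) * Q = a \<cdot>\<^sub>m (P * Q)"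
    using P Q by (simp add: mult_smult_assoc_mat[of _ n n _ n])
  also have "P * Y * Q = X" using d by simp
  finally have e: "a \<cdot>\<^sub>m 1\<^sub>m n + X = P * (a \<cdot>\<^sub>m 1\<^sub>m n + Y) * Q" using d by simp
  show ?thesis
    by (rule similar_mat_witI[of _ _ n], insert d e X Y, auto)
qed

lemma sim_cmat:
  assumes X: "X \<in> carrier_mat n n" and w: "similar_mat_wit X Y P Q"
  shows "similar_mat_wit (cmat X) (cmat Y) (cmat P) (cmat Q)"
proof -
  note d = similar_mat_witD2[OF X w]
  have P: "P \<in> carrier_mat n n" and Q: "Q \<in> carrier_mat n n" and Y: "Y \<in> carrier_mat n n"
    using d by auto
  have 1: "cmat P * cmat Q = 1\<^sub>m n"
    using of_real_hom.mat_hom_mult[OF P Q] d of_real_hom.mat_hom_one by metis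
  have 2: "cmat Q * cmat P = 1\<^sub>m n"
    using of_real_hom.mat_hom_mult[OF Q P] d of_real_hom.mat_hom_one by metis
  have 3: "cmat X = cmat P * cmat Y * cmat Q"
    using of_real_hom.mat_hom_mult[OF mult_carrier_mat[OF P Y] Q] of_real_hom.mat_hom_mult[OF P Y] d by metis
  show ?thesis
    by (rule similar_mat_witI[of _ _ n, OF 1 2 3], insert X Y P Q, auto)
qed

lemma jordan_shift: "a \<cdot>\<^sub>m 1\<^sub>m M + jordan_block M 0 = jordan_block M (a::'a::comm_ring_1)"
  by (rule eq_matI, auto)

lemma cmat_jb: "cmat (jordan_block M a) = jordan_block M (complex_of_real a)"
  by (rule eq_matI, auto)

lemma jordan_T:
  assumes M: "M \<ge> 1"
  shows "jordan_nf (cmat (a \<cdot>\<^sub>m 1\<^sub>m M + 2 \<cdot>\<^sub>m T_mat M)) [(M, complex_of_real a)]"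
proof -
  obtain P Q where w: "similar_mat_wit (2 \<cdot>\<^sub>m T_mat M) (jordan_block M (0::real)) P Q"
    using sim_T by blast
  have c: "2 \<cdot>\<^sub>m T_mat M \<in> carrier_mat M M" by simp
  have w2: "similar_mat_wit (a \<cdot>\<^sub>m 1\<^sub>m M + 2 \<cdot>\<^sub>m T_mat M) (jordan_block M a) P Q"
    using sim_shift[OF c w, of a] unfolding jordan_shift .
  have c2: "a \<cdot>\<^sub>m 1\<^sub>m M + 2 \<cdot>\<^sub>m T_mat M \<in> carrier_mat M M" by simp
  note w3 = sim_cmat[OF c2 w2]
  have jm: "jordan_matrix [(M, complex_of_real a)] = jordan_block M (complex_of_real a)"
    by (simp only: jordan_matrix_def list.map prod.case diag_block_mat_singleton)
  show ?thesis unfolding jordan_nf_def jm similar_mat_def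
    using M w3 unfolding cmat_jb by auto
qed


definition mtr :: "'a::comm_ring_1 mat \<Rightarrow> 'a" where "mtr A = (\<Sum>i\<in>{0..<dim_row A}. A $$ (i,i))"

lemma mtr_comm: assumes A: "A \<in> carrier_mat n m" and B: "B \<in> carrier_mat m n"
  shows "mtr (A * B) = mtr (B * A)"
proof -
  have "mtr (A * B) = (\<Sum>i\<in>{0..<n}. \<Sum>k\<in>{0..<m}. A $$ (i,k) * B $$ (k,i))"
    unfolding mtr_def using A B by (simp add: scalar_prod_def)
  also have "\<dots> = (\<Sum>k\<in>{0..<m}. \<Sum>i\<in>{0..<n}. B $$ (k,i) * A $$ (i,k))"
    by (subst sum.swap, simp add: mult.commute)
  also have "\<dots> = mtr (B * A)"
    unfolding mtr_def using A B by (simp add: scalar_prod_def)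
  finally show ?thesis .
qed

lemma mtr_sim: assumes A: "A \<in> carrier_mat n n" and w: "similar_mat_wit A B P Q"
  shows "mtr A = mtr B"
proof -
  note d = similar_mat_witD2[OF A w]
  have P: "P \<in> carrier_mat n n" and Q: "Q \<in> carrier_mat n n" and B: "B \<in> carrier_mat n n"
    using d by auto
  have "mtr A = mtr (P * (B * Q))" using d P B Q by simp
  also have "\<dots> = mtr ((B * Q) * P)" by (rule mtr_comm[OF P], insert B Q, auto)
  also have "\<dots> = mtr (B * (Q * P))" using B Q P by simp
  also have "\<dots> = mtr B" using d B by simp
  finally show ?thesis .
qed

lemma poly_lin_prod: "e \<in> set es \<Longrightarrow> poly (\<Prod>a\<leftarrow>es. [:- a, 1:]) e = (0::'a::idom)"
  by (induct es) auto

lemma all_eig_trace: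
  fixes A :: "complex mat"
  assumes A: "A \<in> carrier_mat n n" and all: "\<And>e. eigenvalue A e \<Longrightarrow> e = c"
  shows "mtr A = of_nat n * c"
proof -
  obtain es where es: "char_poly A = (\<Prod>a\<leftarrow>es. [:- a, 1:])" "length es = n"
    using char_poly_factorized[OF A] by blast
  obtain B P Q where sd: "schur_decomposition A es = (B,P,Q)" by (metis prod_cases3)
  have sdr: "similar_mat_wit A B P Q \<and> upper_triangular B \<and> diag_mat B = es"
    by (rule schur_decomposition[OF A es(1) sd])
  then have w: "similar_mat_wit A B P Q" and dB: "diag_mat B = es" by simp_all
  have B: "B \<in> carrier_mat n n" using similar_mat_witD2(5)[OF A w] .
  have ev: "\<forall>e\<in>set es. e = c"
  proof
    fix e assume e: "e \<in> set es"
    have "poly (char_poly A) e = 0" unfolding es(1) by (rule poly_lin_prod[OF e])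
    then have "eigenvalue A e" using eigenvalue_root_char_poly[OF A] by simp
    then show "e = c" by (rule all)
  qed
  have r: "es = replicate n c" using replicate_length_same[OF ev] es(2) by simp
  have "mtr A = mtr B" by (rule mtr_sim[OF A w])
  also have "\<dots> = sum_list (diag_mat B)"
  proof -
    have "dim_row B = n" using B by simp
    then show ?thesis unfolding mtr_def diag_mat_def
      by (simp only: sum_set_upt_conv_sum_list_nat[symmetric] set_upt)
  qed
  also have "\<dots> = of_nat n * c" unfolding dB r by (rule sum_list_replicate)
  finally show ?thesis .
qed

lemma sum_lin: "(\<Sum>i\<in>{0..<n}. a + 4 * real i) = real n * a + 2 * real n * (real n - 1)"
proof (induction n)
  case (Suc n)
  have "(\<Sum>i\<in>{0..<Suc n}. a + 4 * real i) = (\<Sum>i\<in>{0..<n}. a + 4 * real i) + (a + 4 * real n)"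
    by simp
  also have "\<dots> = real (Suc n) * a + 2 * real (Suc n) * (real (Suc n) - 1)"
    unfolding Suc.IH by (simp add: algebra_simps)
  finally show ?case .
qed simp

lemma A_carrier[simp]: "A_mat J \<gamma> \<in> carrier_mat J J" and B_carrier[simp]: "B_mat J \<gamma> \<in> carrier_mat J J"
  by (auto simp: A_mat_def B_mat_def)

lemma part_b_A: assumes J: "J \<ge> 1" and all: "\<And>e. eigenvalue (cmat (A_mat J \<gamma>)) e \<Longrightarrow> e = c"
  shows "c = -1"
proof -
  have c: "cmat (A_mat J \<gamma>) \<in> carrier_mat J J" by simp
  have "mtr (cmat (A_mat J \<gamma>)) = of_real (\<Sum>i\<in>{0..<J}. (1 - 2 * real J) + 4 * real i)"
    unfolding mtr_def by (simp add: A_mat_def)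
  also have "\<dots> = of_real (- real J)" unfolding sum_lin by (simp add: algebra_simps)
  finally have "of_nat J * c = - of_nat J" using all_eig_trace[OF c all] by simp
  moreover have "of_nat J \<noteq> (0::complex)" using J by simp
  ultimately show ?thesis by (metis mult_left_cancel mult_minus1_right)
qed

lemma part_b_B: assumes J: "J \<ge> 1" and all: "\<And>e. eigenvalue (cmat (B_mat J \<gamma>)) e \<Longrightarrow> e = c"
  shows "c = 1"
proof -
  have c: "cmat (B_mat J \<gamma>) \<in> carrier_mat J J" by simp
  have "mtr (cmat (B_mat J \<gamma>)) = of_real (\<Sum>i\<in>{0..<J}. (3 - 2 * real J) + 4 * real i)"
    unfolding mtr_def by (simp add: B_mat_def)
  also have "\<dots> = of_real (real J)" unfolding sum_lin by (simp add: algebra_simps)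
  finally have "of_nat J * c = of_nat J" using all_eig_trace[OF c all] by simp
  moreover have "of_nat J \<noteq> (0::complex)" using J by simp
  ultimately show ?thesis by (metis mult_left_cancel mult.right_neutral)
qed


lemma H_carrier[simp]: "H_mat N \<gamma> \<in> carrier_mat N N" by (simp add: H_mat_def)

lemma H_nz: assumes "i < N" "k < N" "H_mat N \<gamma> $$ (i,k) \<noteq> 0"
  shows "k = i \<or> k = i + 2 \<or> i = k + 2"
  using assms by (auto simp: H_mat_def split: if_splits)

lemma par_inv:
  assumes v: "v \<in> carrier_vec N" and z: "\<forall>i<N. P i \<longrightarrow> v $ i = 0"
    and Pp: "\<And>i. P (i + 2) = P i"
  shows "H_mat N \<gamma> *\<^sub>v v \<in> carrier_vec N \<and> (\<forall>i<N. P i \<longrightarrow> (H_mat N \<gamma> *\<^sub>v v) $ i = 0)"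
proof (intro conjI allI impI)
  show "H_mat N \<gamma> *\<^sub>v v \<in> carrier_vec N" by (rule mult_mat_vec_carrier[OF H_carrier v])
  fix i assume i: "i < N" and Pi: "P i"
  have "(H_mat N \<gamma> *\<^sub>v v) $ i = (\<Sum>k\<in>{0..<N}. H_mat N \<gamma> $$ (i,k) * v $ k)"
    using i v by (simp add: scalar_prod_def H_mat_def)
  also have "\<dots> = 0"
  proof (rule sum.neutral, rule ballI)
    fix k assume k: "k \<in> {0..<N}"
    show "H_mat N \<gamma> $$ (i,k) * v $ k = 0"
    proof (cases "H_mat N \<gamma> $$ (i,k) = 0")
      case False
      then have "k = i \<or> k = i + 2 \<or> i = k + 2" using H_nz[of i N k] i k by auto
      then have "P k" using Pi Pp by metis
      then show ?thesis using z k by auto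
    qed simp
  qed
  finally show "(H_mat N \<gamma> *\<^sub>v v) $ i = 0" .
qed

lemma part_a1: "\<forall>v \<in> odd_span N. H_mat N \<gamma> *\<^sub>v v \<in> odd_span N"
  using par_inv[of _ N odd] unfolding odd_span_def by auto

lemma part_a2: "\<forall>v \<in> even_span N. H_mat N \<gamma> *\<^sub>v v \<in> even_span N"
  using par_inv[of _ N even] unfolding even_span_def by auto

definition sig :: "nat \<Rightarrow> nat \<Rightarrow> nat" where
  "sig J i = (if i < J then 2 * i else if i < 2 * J then 2 * (i - J) + 1 else i)"

lemma sig_permutes: "sig J permutes {..<2*J}"
proof (rule bij_imp_permutes)
  have inj: "inj_on (sig J) {..<2*J}"
  proof (rule inj_onI)
    fix x y assume "x \<in> {..<2*J}" "y \<in> {..<2*J}" "sig J x = sig J y"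
    then show "x = y" unfolding sig_def by (auto split: if_splits) presburger+
  qed
  have sub: "sig J ` {..<2*J} \<subseteq> {..<2*J}" unfolding sig_def by auto
  show "bij_betw (sig J) {..<2*J} {..<2*J}"
    unfolding bij_betw_def using inj endo_inj_surj[OF _ sub inj] by auto
  show "\<And>x. x \<notin> {..<2*J} \<Longrightarrow> sig J x = x" unfolding sig_def by auto
qed


lemma sig_lt: "i < 2 * J \<Longrightarrow> sig J i < 2 * J" unfolding sig_def by auto

lemma PHP_entry:
  assumes N: "N = 2 * J" and i: "i < N" and j: "j < N"
  shows "(perm_matrix N (sig J) * H_mat N \<gamma> * transpose_mat (perm_matrix N (sig J))) $$ (i,j)
     = H_mat N \<gamma> $$ (sig J i, sig J j)"
proof -
  have P: "perm_matrix N (sig J) \<in> carrier_mat N N" by (simp add: perm_matrix_def)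
  have Pt: "transpose_mat (perm_matrix N (sig J)) \<in> carrier_mat N N" by (simp add: perm_matrix_def)
  have PH: "perm_matrix N (sig J) * H_mat N \<gamma> \<in> carrier_mat N N" by (rule mult_carrier_mat[OF P H_carrier])
  have si: "sig J i < N" and sj: "sig J j < N" using sig_lt i j N by auto
  have e1: "\<And>k. k < N \<Longrightarrow> (perm_matrix N (sig J) * H_mat N \<gamma>) $$ (i,k) = H_mat N \<gamma> $$ (sig J i, k)"
  proof -
    fix k assume k: "k < N"
    show "(perm_matrix N (sig J) * H_mat N \<gamma>) $$ (i,k) = H_mat N \<gamma> $$ (sig J i, k)"
      using mult_left_single[OF P H_carrier, of i "sig J i" 1 k] i k si
      by (simp add: perm_matrix_def)
  qed
  have "(perm_matrix N (sig J) * H_mat N \<gamma> * transpose_mat (perm_matrix N (sig J))) $$ (i,j)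
     = (perm_matrix N (sig J) * H_mat N \<gamma>) $$ (i, sig J j)"
    using mult_right_single[OF Pt PH, of j "sig J j" 1 i] i j sj
    by (simp add: perm_matrix_def)
  also have "\<dots> = H_mat N \<gamma> $$ (sig J i, sig J j)" by (rule e1[OF sj])
  finally show ?thesis .
qed

lemma PHP:
  assumes N: "N = 2 * J"
  shows "perm_matrix N (sig J) * H_mat N \<gamma> * transpose_mat (perm_matrix N (sig J))
    = four_block_mat (A_mat J \<gamma>) (0\<^sub>m J J) (0\<^sub>m J J) (B_mat J \<gamma>)"
proof (rule eq_matI)
  fix i j assume ij: "i < dim_row (four_block_mat (A_mat J \<gamma>) (0\<^sub>m J J) (0\<^sub>m J J) (B_mat J \<gamma>))"
     "j < dim_col (four_block_mat (A_mat J \<gamma>) (0\<^sub>m J J) (0\<^sub>m J J) (B_mat J \<gamma>))"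
  hence i: "i < N" and j: "j < N" using N by (auto simp: A_mat_def B_mat_def)
  have fb: "four_block_mat (A_mat J \<gamma>) (0\<^sub>m J J) (0\<^sub>m J J) (B_mat J \<gamma>) $$ (i,j)
     = (if i < J then if j < J then A_mat J \<gamma> $$ (i,j) else 0
        else if j < J then 0 else B_mat J \<gamma> $$ (i - J, j - J))"
    using i j N by (simp add: A_mat_def B_mat_def)
  show "(perm_matrix N (sig J) * H_mat N \<gamma> * transpose_mat (perm_matrix N (sig J))) $$ (i,j)
     = four_block_mat (A_mat J \<gamma>) (0\<^sub>m J J) (0\<^sub>m J J) (B_mat J \<gamma>) $$ (i,j)"
    unfolding PHP_entry[OF N i j] fb
  proof (cases "i < J"; cases "j < J")
    assume a: "i < J" "j < J"
    then show "H_mat N \<gamma> $$ (sig J i, sig J j) = (if i < J then if j < J then A_mat J \<gamma> $$ (i,j) else 0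
        else if j < J then 0 else B_mat J \<gamma> $$ (i - J, j - J))"
      using N by (auto simp: sig_def H_mat_def A_mat_def algebra_simps)
  next
    assume a: "i < J" "\<not> j < J"
    then show "H_mat N \<gamma> $$ (sig J i, sig J j) = (if i < J then if j < J then A_mat J \<gamma> $$ (i,j) else 0
        else if j < J then 0 else B_mat J \<gamma> $$ (i - J, j - J))"
      using N i j by (auto simp: sig_def H_mat_def) presburger+
  next
    assume a: "\<not> i < J" "j < J"
    then show "H_mat N \<gamma> $$ (sig J i, sig J j) = (if i < J then if j < J then A_mat J \<gamma> $$ (i,j) else 0
        else if j < J then 0 else B_mat J \<gamma> $$ (i - J, j - J))"
      using N i j by (auto simp: sig_def H_mat_def) presburger+
  next
    assume a: "\<not> i < J" "\<not> j < J"
    then show "H_mat N \<gamma> $$ (sig J i, sig J j) = (if i < J then if j < J then A_mat J \<gamma> $$ (i,j) else 0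
        else if j < J then 0 else B_mat J \<gamma> $$ (i - J, j - J))"
      using N i j by (auto simp: sig_def H_mat_def B_mat_def algebra_simps)
  qed
qed (auto simp: N perm_matrix_def A_mat_def B_mat_def)


lemma c_A:
  assumes N: "N = 2 * J"
    and h: "\<forall>n. 1 \<le> n \<and> n \<le> N - 2 \<longrightarrow>
             \<gamma> n = 2 * sqrt (real ((n+1) div 2) * (real J - real ((n+1) div 2)))"
  shows "A_mat J \<gamma> = - 1\<^sub>m J + 2 \<cdot>\<^sub>m T_mat J"
proof -
  have g: "\<And>i. i + 1 < J \<Longrightarrow> \<gamma> (2*i+1) = 2 * sqrt (real (i+1) * (real J - real (i+1)))"
  proof -
    fix i assume "i + 1 < J"
    then have "1 \<le> 2*i+1 \<and> 2*i+1 \<le> N - 2" using N by auto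
    moreover have "(2*i+1+1) div 2 = i + 1" by simp
    ultimately show "\<gamma> (2*i+1) = 2 * sqrt (real (i+1) * (real J - real (i+1)))" using h by metis
  qed
  show ?thesis
  proof (rule eq_matI)
    fix i j assume ij: "i < dim_row (- 1\<^sub>m J + 2 \<cdot>\<^sub>m T_mat J)" "j < dim_col (- 1\<^sub>m J + 2 \<cdot>\<^sub>m T_mat J)"
    hence i: "i < J" and j: "j < J" by (auto simp: T_mat_def)
    show "A_mat J \<gamma> $$ (i,j) = (- 1\<^sub>m J + 2 \<cdot>\<^sub>m T_mat J) $$ (i,j)"
      using i j g[of i] g[of j] by (auto simp: A_mat_def T_mat_def algebra_simps)
  qed (auto simp: A_mat_def T_mat_def)
qed

lemma c_B:
  assumes N: "N = 2 * J"
    and h: "\<forall>n. 1 \<le> n \<and> n \<le> N - 2 \<longrightarrow>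
             \<gamma> n = 2 * sqrt (real ((n+1) div 2) * (real J - real ((n+1) div 2)))"
  shows "B_mat J \<gamma> = 1\<^sub>m J + 2 \<cdot>\<^sub>m T_mat J"
proof -
  have g: "\<And>i. i + 1 < J \<Longrightarrow> \<gamma> (2*i+2) = 2 * sqrt (real (i+1) * (real J - real (i+1)))"
  proof -
    fix i assume "i + 1 < J"
    then have "1 \<le> 2*i+2 \<and> 2*i+2 \<le> N - 2" using N by auto
    moreover have "(2*i+2+1) div 2 = i + 1" by simp
    ultimately show "\<gamma> (2*i+2) = 2 * sqrt (real (i+1) * (real J - real (i+1)))" using h by metis
  qed
  show ?thesis
  proof (rule eq_matI)
    fix i j assume ij: "i < dim_row (1\<^sub>m J + 2 \<cdot>\<^sub>m T_mat J)" "j < dim_col (1\<^sub>m J + 2 \<cdot>\<^sub>m T_mat J)"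
    hence i: "i < J" and j: "j < J" by (auto simp: T_mat_def)
    show "B_mat J \<gamma> $$ (i,j) = (1\<^sub>m J + 2 \<cdot>\<^sub>m T_mat J) $$ (i,j)"
      using i j g[of i] g[of j] by (auto simp: B_mat_def T_mat_def algebra_simps)
  qed (auto simp: B_mat_def T_mat_def)
qed

lemma eig_jordan:
  assumes jnf: "jordan_nf X [(M, a)]" and X: "X \<in> carrier_mat M M" and M: "M \<ge> 1"
  shows "eigenvalue X e \<longleftrightarrow> e = (a::complex)"
proof -
  have cp: "char_poly X = [:- a, 1:] ^ M" using jordan_nf_char_poly[OF jnf] by simp
  have "eigenvalue X e \<longleftrightarrow> poly ([:- a, 1:] ^ M) e = 0"
    using eigenvalue_root_char_poly[OF X] cp by simp
  also have "\<dots> \<longleftrightarrow> e = a" using M by (simp add: poly_power)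
  finally show ?thesis .
qed

lemma neg_one: "- 1\<^sub>m J = (-1::real) \<cdot>\<^sub>m 1\<^sub>m J" by (rule eq_matI, auto)
lemma pos_one: "1\<^sub>m J = (1::real) \<cdot>\<^sub>m 1\<^sub>m J" by (rule eq_matI, auto)

lemma part_c:
  assumes J: "J \<ge> 1" and N: "N = 2 * J"
    and h: "\<forall>n. 1 \<le> n \<and> n \<le> N - 2 \<longrightarrow>
             \<gamma> n = 2 * sqrt (real ((n+1) div 2) * (real J - real ((n+1) div 2)))"
  shows "A_mat J \<gamma> = - 1\<^sub>m J + 2 \<cdot>\<^sub>m T_mat J
          \<and> B_mat J \<gamma> = 1\<^sub>m J + 2 \<cdot>\<^sub>m T_mat J
          \<and> (\<forall>e. eigenvalue (cmat (A_mat J \<gamma>)) e \<longleftrightarrow> e = -1)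
          \<and> (\<forall>e. eigenvalue (cmat (B_mat J \<gamma>)) e \<longleftrightarrow> e = 1)
          \<and> jordan_nf (cmat (A_mat J \<gamma>)) [(J, -1)]
          \<and> jordan_nf (cmat (B_mat J \<gamma>)) [(J, 1)]"
proof -
  have a: "A_mat J \<gamma> = - 1\<^sub>m J + 2 \<cdot>\<^sub>m T_mat J" by (rule c_A[OF N h])
  have b: "B_mat J \<gamma> = 1\<^sub>m J + 2 \<cdot>\<^sub>m T_mat J" by (rule c_B[OF N h])
  have ja: "jordan_nf (cmat (A_mat J \<gamma>)) [(J, -1)]"
    using jordan_T[OF J, of "-1"] unfolding a neg_one by simp
  have jb: "jordan_nf (cmat (B_mat J \<gamma>)) [(J, 1)]"
    using jordan_T[OF J, of "1"] unfolding b by (subst pos_one, simp)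
  have ca: "cmat (A_mat J \<gamma>) \<in> carrier_mat J J" by simp
  have cb: "cmat (B_mat J \<gamma>) \<in> carrier_mat J J" by simp
  show ?thesis using a b ja jb eig_jordan[OF ja ca J] eig_jordan[OF jb cb J] by blast
qed


lemma P_Pt:
  assumes N: "N = 2 * J"
  shows "perm_matrix N (sig J) * transpose_mat (perm_matrix N (sig J)) = 1\<^sub>m N"
proof (rule eq_matI)
  have P: "perm_matrix N (sig J) \<in> carrier_mat N N" by (simp add: perm_matrix_def)
  have Pt: "transpose_mat (perm_matrix N (sig J)) \<in> carrier_mat N N" by (simp add: perm_matrix_def)
  have inj: "inj_on (sig J) {..<N}" using permutes_inj_on[OF sig_permutes[of J]] N by simp
  fix i j assume ij: "i < dim_row (1\<^sub>m N)" "j < dim_col (1\<^sub>m N)"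
  hence i: "i < N" and j: "j < N" by auto
  have si: "sig J i < N" using sig_lt i N by auto
  have "(perm_matrix N (sig J) * transpose_mat (perm_matrix N (sig J))) $$ (i,j)
      = transpose_mat (perm_matrix N (sig J)) $$ (sig J i, j)"
    using mult_left_single[OF P Pt, of i "sig J i" 1 j] i j si by (simp add: perm_matrix_def)
  also have "\<dots> = (if sig J i = sig J j then 1 else 0)" using si j by (simp add: perm_matrix_def)
  also have "\<dots> = 1\<^sub>m N $$ (i,j)" using inj i j by (auto dest: inj_onD)
  finally show "(perm_matrix N (sig J) * transpose_mat (perm_matrix N (sig J))) $$ (i,j) = 1\<^sub>m N $$ (i,j)" .
qed (auto simp: perm_matrix_def)

lemma H_sim:
  assumes N: "N = 2 * J"
  shows "similar_mat_wit (H_mat N \<gamma>) (four_block_mat (A_mat J \<gamma>) (0\<^sub>m J J) (0\<^sub>m J J) (B_mat J \<gamma>))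
     (transpose_mat (perm_matrix N (sig J))) (perm_matrix N (sig J))"
proof -
  let ?P = "perm_matrix N (sig J)" and ?Q = "transpose_mat (perm_matrix N (sig J))"
  let ?F = "four_block_mat (A_mat J \<gamma>) (0\<^sub>m J J) (0\<^sub>m J J) (B_mat J \<gamma>)"
  have P: "?P \<in> carrier_mat N N" by (simp add: perm_matrix_def)
  have Q: "?Q \<in> carrier_mat N N" by (simp add: perm_matrix_def)
  have PQ: "?P * ?Q = 1\<^sub>m N" by (rule P_Pt[OF N])
  have QP: "?Q * ?P = 1\<^sub>m N" by (rule mat_mult_left_right_inverse[OF P Q PQ])
  have "?F \<in> carrier_mat (J + J) (J + J)" by (rule four_block_carrier_mat[OF A_carrier B_carrier])
  then have F: "?F \<in> carrier_mat N N" using N by (simp add: mult_2)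
  have H: "H_mat N \<gamma> \<in> carrier_mat N N" by simp
  have w0: "similar_mat_wit ?F (H_mat N \<gamma>) ?P ?Q"
    by (rule similar_mat_witI[OF PQ QP PHP[OF N, symmetric] F H P Q])
  show ?thesis by (rule similar_mat_wit_sym[OF w0])
qed

lemma no_single:
  assumes J: "J \<ge> 1" and N: "N = 2 * J"
  shows "\<not> (\<exists>c. order c (char_poly (cmat (H_mat N \<gamma>))) = N)"
proof
  assume "\<exists>c. order c (char_poly (cmat (H_mat N \<gamma>))) = N"
  then obtain c where oc: "order c (char_poly (cmat (H_mat N \<gamma>))) = N" by blast
  let ?F = "four_block_mat (A_mat J \<gamma>) (0\<^sub>m J J) (0\<^sub>m J J) (B_mat J \<gamma>)"
  let ?pH = "char_poly (cmat (H_mat N \<gamma>))"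
  let ?pA = "char_poly (cmat (A_mat J \<gamma>))" and ?pB = "char_poly (cmat (B_mat J \<gamma>))"
  have H: "H_mat N \<gamma> \<in> carrier_mat N N" by simp
  have cH: "cmat (H_mat N \<gamma>) \<in> carrier_mat N N" by simp
  note w = sim_cmat[OF H H_sim[OF N]]
  have cF: "cmat ?F = four_block_mat (cmat (A_mat J \<gamma>)) (0\<^sub>m J J) (0\<^sub>m J J) (cmat (B_mat J \<gamma>))"
    by (rule eq_matI, auto simp: A_mat_def B_mat_def)
  have "?pH = char_poly (cmat ?F)"
    by (rule char_poly_similar, unfold similar_mat_def, rule exI, rule exI, rule w)
  also have "\<dots> = ?pA * ?pB"
    by (rule char_poly_0_block[OF cF], insert char_poly_factorized[of "cmat (A_mat J \<gamma>)" J]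
        char_poly_factorized[of "cmat (B_mat J \<gamma>)" J], auto)
  finally have pH: "?pH = ?pA * ?pB" .
  have dH: "degree ?pH = N" and nz: "?pH \<noteq> 0" using degree_monic_char_poly[OF cH] by auto
  obtain q where q: "?pH = [:-c, 1:] ^ N * q" using order_1[of c ?pH] unfolding oc by (auto elim: dvdE)
  have qnz: "q \<noteq> 0" using nz q by auto
  have "degree ?pH = N + degree q" unfolding q using qnz
    by (simp add: degree_mult_eq degree_power_eq)
  then have "degree q = 0" using dH by simp
  then have q0: "q = [: coeff q 0 :]" using degree_0_id by metis
  have cq: "coeff q 0 \<noteq> 0" using qnz q0 by (metis pCons_0_0)
  have root: "\<And>e. poly ?pH e = 0 \<Longrightarrow> e = c"
  proof -
    fix e assume "poly ?pH e = 0"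
    then have "(e - c) ^ N * coeff q 0 = 0" unfolding q by (subst (asm) q0) (auto simp: poly_power)
    then show "e = c" using cq by simp
  qed
  have cA: "cmat (A_mat J \<gamma>) \<in> carrier_mat J J" and cB: "cmat (B_mat J \<gamma>) \<in> carrier_mat J J" by simp_all
  have "c = -1"
  proof (rule part_b_A[OF J])
    fix e assume "eigenvalue (cmat (A_mat J \<gamma>)) e"
    then have "poly ?pA e = 0" using eigenvalue_root_char_poly[OF cA] by simp
    then show "e = c" using root unfolding pH by simp
  qed
  moreover have "c = 1"
  proof (rule part_b_B[OF J])
    fix e assume "eigenvalue (cmat (B_mat J \<gamma>)) e"
    then have "poly ?pB e = 0" using eigenvalue_root_char_poly[OF cB] by simp
    then show "e = c" using root unfolding pH by simp
  qed
  ultimately show False by simp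
qed

theorem lemma1:
  fixes J N :: nat and \<gamma> :: "nat \<Rightarrow> real"
  assumes J: "J \<ge> 1" and N: "N = 2 * J"
    and sym: "\<And>n. 1 \<le> n \<Longrightarrow> n \<le> N - 2 \<Longrightarrow> \<gamma> n = \<gamma> (N - 1 - n)"
  shows
    \<comment> \<open>(a)\<close>
    "(\<forall>v \<in> odd_span N. H_mat N \<gamma> *\<^sub>v v \<in> odd_span N)
     \<and> (\<forall>v \<in> even_span N. H_mat N \<gamma> *\<^sub>v v \<in> even_span N)
     \<and> (\<exists>\<sigma>. \<sigma> permutes {..<N} \<and>
          perm_matrix N \<sigma> * H_mat N \<gamma> * transpose_mat (perm_matrix N \<sigma>)
            = four_block_mat (A_mat J \<gamma>) (0\<^sub>m J J) (0\<^sub>m J J) (B_mat J \<gamma>))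
     \<comment> \<open>(b)\<close>
     \<and> (\<forall>c. (\<forall>e. eigenvalue (cmat (A_mat J \<gamma>)) e \<longrightarrow> e = c) \<longrightarrow> c = -1)
     \<and> (\<forall>c. (\<forall>e. eigenvalue (cmat (B_mat J \<gamma>)) e \<longrightarrow> e = c) \<longrightarrow> c = 1)
     \<and> \<not> (\<exists>c. order c (char_poly (cmat (H_mat N \<gamma>))) = N)
     \<comment> \<open>(c)\<close>
     \<and> ((\<forall>n. 1 \<le> n \<and> n \<le> N - 2 \<longrightarrow>
             \<gamma> n = 2 * sqrt (real ((n+1) div 2) * (real J - real ((n+1) div 2))))
        \<longrightarrow> A_mat J \<gamma> = - 1\<^sub>m J + 2 \<cdot>\<^sub>m T_mat J
          \<and> B_mat J \<gamma> = 1\<^sub>m J + 2 \<cdot>\<^sub>m T_mat J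
          \<and> (\<forall>e. eigenvalue (cmat (A_mat J \<gamma>)) e \<longleftrightarrow> e = -1)
          \<and> (\<forall>e. eigenvalue (cmat (B_mat J \<gamma>)) e \<longleftrightarrow> e = 1)
          \<and> jordan_nf (cmat (A_mat J \<gamma>)) [(J, -1)]
          \<and> jordan_nf (cmat (B_mat J \<gamma>)) [(J, 1)])"
proof (intro conjI)
  show "\<forall>v \<in> odd_span N. H_mat N \<gamma> *\<^sub>v v \<in> odd_span N" by (rule part_a1)
  show "\<forall>v \<in> even_span N. H_mat N \<gamma> *\<^sub>v v \<in> even_span N" by (rule part_a2)
  show "\<exists>\<sigma>. \<sigma> permutes {..<N} \<and>
          perm_matrix N \<sigma> * H_mat N \<gamma> * transpose_mat (perm_matrix N \<sigma>)
            = four_block_mat (A_mat J \<gamma>) (0\<^sub>m J J) (0\<^sub>m J J) (B_mat J \<gamma>)"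
    using sig_permutes[of J] PHP[OF N, of \<gamma>] N by blast
  show "\<forall>c. (\<forall>e. eigenvalue (cmat (A_mat J \<gamma>)) e \<longrightarrow> e = c) \<longrightarrow> c = -1"
    using part_b_A[OF J] by blast
  show "\<forall>c. (\<forall>e. eigenvalue (cmat (B_mat J \<gamma>)) e \<longrightarrow> e = c) \<longrightarrow> c = 1"
    using part_b_B[OF J] by blast
  show "\<not> (\<exists>c. order c (char_poly (cmat (H_mat N \<gamma>))) = N)" by (rule no_single[OF J N])
  show "(\<forall>n. 1 \<le> n \<and> n \<le> N - 2 \<longrightarrow>
             \<gamma> n = 2 * sqrt (real ((n+1) div 2) * (real J - real ((n+1) div 2))))
        \<longrightarrow> A_mat J \<gamma> = - 1\<^sub>m J + 2 \<cdot>\<^sub>m T_mat J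
          \<and> B_mat J \<gamma> = 1\<^sub>m J + 2 \<cdot>\<^sub>m T_mat J
          \<and> (\<forall>e. eigenvalue (cmat (A_mat J \<gamma>)) e \<longleftrightarrow> e = -1)
          \<and> (\<forall>e. eigenvalue (cmat (B_mat J \<gamma>)) e \<longleftrightarrow> e = 1)
          \<and> jordan_nf (cmat (A_mat J \<gamma>)) [(J, -1)]
          \<and> jordan_nf (cmat (B_mat J \<gamma>)) [(J, 1)]"
    using part_c[OF J N] by blast
qed


end
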